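(* Let $\alpha$ be an expanding algebraic number, $\mathcal{D}\subset\mathbb{Z}[\alpha]$ a standard digit set for $\alpha$, and $m\in\mathbb{Z}$ with $\mathcal{D}\subset\alpha^m\mathbb{Z}[\alpha^{-1}]$. Suppose $\mathcal{D}$ contains a complete residue system of $\alpha^m\mathbb{Z}[\alpha^{-1}]/\alpha^{m-1}\mathbb{Z}[\alpha^{-1}]$. Then for every $x\in\Lambda_{\alpha,m}$ there is $d\in\mathcal{D}$ with $\alpha x+d\in\Lambda_{\alpha,m}$, and consequently $\mathcal{G}(x)\neq\emptyset$.
   Context: $\alpha$ is an algebraic number all of whose conjugates have modulus $>1$. $K=\mathbb{Q}(\alpha)$, $\alpha\mathcal{O}_K=\mathfrak{a}/\mathfrak{b}$ with coprime integral ideals; $S_\alpha$ = infinite primes together with primes dividing $\mathfrak{b}$; $\mathbb{K}_\alpha=\prod_{\mathfrak{p}\in S_\alpha}K_\mathfrak{p}$ (completions), $\Phi_\alpha$ diagonal embedding. $\mathcal{D}$ standard: complete residue system of $\mathbb{Z}[\alpha]/\alpha\mathbb{Z}[\alpha]$. $\mathcal{F}=\{\sum_{k\ge1}\Phi_\alpha(d_k\alpha^{-k}):d_k\in\mathcal{D}\}$; $\mathcal{G}(x)=\{(z_\mathfrak{p})\in\mathcal{F}+\Phi_\alpha(x): z_\mathfrak{p}=0\ \forall\mathfrak{p}\mid\mathfrak{b}\}$. $\Lambda_{\alpha,k}=\mathbb{Z}[\alpha]\cap\alpha^{k-1}\mathbb{Z}[\alpha^{-1}]$. *)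

theory Defs
  imports "HOL-Computational_Algebra.Polynomial" Complex_Main
begin

text \<open>Conjugates of an algebraic number: the roots of its minimal polynomial, i.e.
  the complex numbers that are roots of every integer polynomial vanishing at it.\<close>
definition conjugate :: "complex \<Rightarrow> complex \<Rightarrow> bool" where
  "conjugate a b \<longleftrightarrow> (\<forall>p :: complex poly. (\<forall>i. coeff p i \<in> \<int>) \<longrightarrow> poly p a = 0 \<longrightarrow> poly p b = 0)"

definition expanding :: "complex \<Rightarrow> bool" where
  "expanding a \<longleftrightarrow> algebraic a \<and> (\<forall>b. conjugate a b \<longrightarrow> 1 < cmod b)"

definition Zring :: "complex \<Rightarrow> complex set" where
  "Zring a = {poly p a | p :: complex poly. \<forall>i. coeff p i \<in> \<int>}"

definition Qfield :: "complex \<Rightarrow> complex set" where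
  "Qfield a = {poly p a / poly q a | p q :: complex poly.
      (\<forall>i. coeff p i \<in> \<rat>) \<and> (\<forall>i. coeff q i \<in> \<rat>) \<and> poly q a \<noteq> 0}"

definition OK :: "complex \<Rightarrow> complex set" where
  "OK a = {z \<in> Qfield a. algebraic_int z}"

definition smult_set :: "complex \<Rightarrow> complex set \<Rightarrow> complex set" where
  "smult_set u S = (\<lambda>y. u * y) ` S"

definition Lambda :: "complex \<Rightarrow> int \<Rightarrow> complex set" where
  "Lambda a k = Zring a \<inter> smult_set (a powi (k - 1)) (Zring (inverse a))"

definition standard_digits :: "complex \<Rightarrow> complex set \<Rightarrow> bool" where
  "standard_digits a D \<longleftrightarrow> D \<subseteq> Zring a \<and>
     (\<forall>z \<in> Zring a. \<exists>!d. d \<in> D \<and> z - d \<in> smult_set a (Zring a))"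

definition prime_ideal_OK :: "complex \<Rightarrow> complex set \<Rightarrow> bool" where
  "prime_ideal_OK a P \<longleftrightarrow> P \<subseteq> OK a \<and> 0 \<in> P \<and> P \<noteq> {0} \<and> P \<noteq> OK a \<and>
     (\<forall>x \<in> P. \<forall>y \<in> P. x + y \<in> P) \<and>
     (\<forall>x \<in> P. \<forall>r \<in> OK a. r * x \<in> P) \<and>
     (\<forall>x \<in> OK a. \<forall>y \<in> OK a. x * y \<in> P \<longrightarrow> x \<in> P \<or> y \<in> P)"

fun ideal_pow :: "complex \<Rightarrow> complex set \<Rightarrow> nat \<Rightarrow> complex set" where
  "ideal_pow a P 0 = OK a"
| "ideal_pow a P (Suc n) = {\<Sum>i\<in>I. f i * g i | (I :: nat set) f g. finite I \<and>
       (\<forall>i\<in>I. f i \<in> ideal_pow a P n \<and> g i \<in> P)}"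

definition localize :: "complex \<Rightarrow> complex set \<Rightarrow> complex set \<Rightarrow> complex set" where
  "localize a P S = {s / t | s t. s \<in> S \<and> t \<in> OK a - P}"

text \<open>\<open>P\<close> divides the denominator ideal \<open>\<b>\<close> of \<open>a\<O>_K = \<a>/\<b>\<close> iff \<open>v_P(a) < 0\<close>,
  i.e. iff \<open>a\<close> is not in the local ring \<open>\<O>_{K,(P)}\<close>.\<close>
definition divides_denom :: "complex \<Rightarrow> complex set \<Rightarrow> bool" where
  "divides_denom a P \<longleftrightarrow> prime_ideal_OK a P \<and> a \<notin> localize a P (OK a)"

definition padic_tendsto_zero :: "complex \<Rightarrow> complex set \<Rightarrow> (nat \<Rightarrow> complex) \<Rightarrow> bool" where
  "padic_tendsto_zero a P s \<longleftrightarrow>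
     (\<forall>N. \<exists>n0. \<forall>n\<ge>n0. s n \<in> localize a P (ideal_pow a P N))"

text \<open>\<open>\<G>(x) \<noteq> \<emptyset>\<close>: there is a digit sequence \<open>(d_k)_{k\<ge>1}\<close> such that the
  \<open>P\<close>-component of \<open>\<Sum>_{k\<ge>1} \<Phi>(d_k a^-k) + \<Phi>(x)\<close> vanishes for every \<open>P | \<b>\<close>
  (the components at infinite places are unconstrained).\<close>
definition G_nonempty :: "complex \<Rightarrow> complex set \<Rightarrow> complex \<Rightarrow> bool" where
  "G_nonempty a D x \<longleftrightarrow> (\<exists>d :: nat \<Rightarrow> complex. (\<forall>k\<ge>1. d k \<in> D) \<and>
     (\<forall>P. divides_denom a P \<longrightarrow>
        padic_tendsto_zero a P (\<lambda>n. x + (\<Sum>k=1..n. d k / a ^ k))))"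

end

theory Submission
  imports Defs "Jordan_Normal_Form.Char_Poly"
begin


lemma content_pCons_int: "content (pCons (a::int) p) = gcd a (content p)"
  by (metis (no_types, lifting) comp_apply content_0 content_eq_fold_coeffs fold_coeffs_pCons_coeff_not_0_eq fold_coeffs_pCons_not_0_0_eq gcd_eq_0_iff pCons_eq_0_iff)

lemma eig_alg_int:
  fixes x :: complex and v :: "nat \<Rightarrow> complex" and A :: "nat \<Rightarrow> nat \<Rightarrow> int"
  assumes "i0 < n" "v i0 \<noteq> 0"
    and "\<And>i. i < n \<Longrightarrow> x * v i = (\<Sum>j<n. of_int (A i j) * v j)"
  shows "algebraic_int x"
proof -
  define B where "B = mat n n (\<lambda>(i,j). A i j)"
  define C where "C = map_mat (of_int :: int \<Rightarrow> complex) B"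
  have B: "B \<in> carrier_mat n n" unfolding B_def by simp
  have C: "C \<in> carrier_mat n n" unfolding C_def using B by simp
  define w where "w = vec n v"
  have "eigenvector C w x"
    unfolding eigenvector_def
  proof (intro conjI)
    show "w \<in> carrier_vec (dim_row C)" using C w_def by simp
    show "w \<noteq> 0\<^sub>v (dim_row C)"
    proof
      assume "w = 0\<^sub>v (dim_row C)"
      then have "w $ i0 = 0" using assms(1) C by simp
      then show False using assms(1,2) w_def by simp
    qed
    show "C *\<^sub>v w = x \<cdot>\<^sub>v w"
    proof (rule eq_vecI)
      fix i assume "i < dim_vec (x \<cdot>\<^sub>v w)"
      then have i: "i < n" using w_def by simp
      have dr: "i < dim_row C" using i C by simp
      have "(C *\<^sub>v w) $ i = row C i \<bullet> w" by (rule index_mult_mat_vec[OF dr])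
      also have "\<dots> = (\<Sum>j\<in>{0..<n}. row C i $ j * w $ j)"
        unfolding scalar_prod_def w_def by simp
      also have "\<dots> = (\<Sum>j<n. of_int (A i j) * v j)"
        unfolding lessThan_atLeast0
      proof (rule sum.cong[OF refl])
        fix j assume j: "j \<in> {0..<n}"
        then have "j < dim_col C" using C by simp
        then have "row C i $ j = C $$ (i, j)" using dr by simp
        also have "\<dots> = of_int (A i j)" using i j unfolding C_def B_def by simp
        finally show "row C i $ j * w $ j = of_int (A i j) * v j" using j w_def by simp
      qed
      also have "\<dots> = x * v i" using assms(3)[OF i] by simp
      finally show "(C *\<^sub>v w) $ i = (x \<cdot>\<^sub>v w) $ i" using i w_def by simp
    qed (use C w_def in simp)
  qed
  then have "eigenvalue C x" unfolding eigenvalue_def by blast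
  then have "poly (char_poly C) x = 0" using eigenvalue_root_char_poly[OF C] by simp
  moreover have "char_poly C = map_poly of_int (char_poly B)"
    unfolding C_def by (rule of_int_hom.char_poly_hom[OF B])
  moreover have "lead_coeff (char_poly B) = 1" using degree_monic_char_poly[OF B] by simp
  ultimately show ?thesis unfolding algebraic_int_altdef_ipoly by auto
qed



definition intpoly :: "complex poly \<Rightarrow> bool" where
  "intpoly p \<longleftrightarrow> (\<forall>i. coeff p i \<in> \<int>)"

lemma Zring_iff: "z \<in> Zring a \<longleftrightarrow> (\<exists>p. intpoly p \<and> z = poly p a)"
  by (auto simp: Zring_def intpoly_def)

lemma intpoly_add: "intpoly p \<Longrightarrow> intpoly q \<Longrightarrow> intpoly (p + q)"
  by (auto simp: intpoly_def)

lemma intpoly_mult: "intpoly p \<Longrightarrow> intpoly q \<Longrightarrow> intpoly (p * q)"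
  unfolding intpoly_def coeff_mult by (auto intro!: Ints_sum Ints_mult)

lemma intpoly_const: "c \<in> \<int> \<Longrightarrow> intpoly [:c:]"
  by (auto simp: intpoly_def coeff_pCons split: nat.splits)

lemma intpoly_X: "intpoly [:0, 1:]"
  by (auto simp: intpoly_def coeff_pCons split: nat.splits)

lemma Zring_add: "x \<in> Zring a \<Longrightarrow> y \<in> Zring a \<Longrightarrow> x + y \<in> Zring a"
  unfolding Zring_iff by (metis intpoly_add poly_add)

lemma Zring_mult: "x \<in> Zring a \<Longrightarrow> y \<in> Zring a \<Longrightarrow> x * y \<in> Zring a"
  unfolding Zring_iff by (metis intpoly_mult poly_mult)

lemma Zring_of_int: "of_int k \<in> Zring a"
  unfolding Zring_iff
  by (rule exI[of _ "[:of_int k:]"]) (auto intro: intpoly_const)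

lemma Zring_var: "a \<in> Zring a"
  unfolding Zring_iff
  by (rule exI[of _ "[:0, 1:]"]) (auto intro: intpoly_X)

lemma Zring_Ints: "c \<in> \<int> \<Longrightarrow> c \<in> Zring a"
  by (metis Ints_cases Zring_of_int)

lemma Zring_minus: "x \<in> Zring a \<Longrightarrow> - x \<in> Zring a"
  using Zring_mult[OF Zring_of_int[of "-1"]] by fastforce

lemma Zring_diff: "x \<in> Zring a \<Longrightarrow> y \<in> Zring a \<Longrightarrow> x - y \<in> Zring a"
  using Zring_add Zring_minus by (metis diff_conv_add_uminus)

lemma Zring_power: "x \<in> Zring a \<Longrightarrow> x ^ k \<in> Zring a"
  by (induction k) (auto intro: Zring_mult Zring_of_int[of 1, simplified])

lemma Zring_sum: "finite I \<Longrightarrow> (\<And>i. i \<in> I \<Longrightarrow> f i \<in> Zring a) \<Longrightarrow> sum f I \<in> Zring a"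
  by (induction I rule: finite_induct) (auto intro: Zring_add Zring_of_int[of 0, simplified])

lemma Zring_Qfield: "x \<in> Zring a \<Longrightarrow> x \<in> Qfield a"
  unfolding Zring_def Qfield_def
proof clarify
  fix p :: "complex poly" assume "\<forall>i. coeff p i \<in> \<int>"
  then show "\<exists>p' q. poly p a = poly p' a / poly q a \<and> (\<forall>i. coeff p' i \<in> \<rat>) \<and> (\<forall>i. coeff q i \<in> \<rat>) \<and> poly q a \<noteq> 0"
    by (intro exI[of _ p] exI[of _ 1]) (auto simp: coeff_1 Ints_subset_Rats[THEN subsetD])
qed

definition subring :: "complex set \<Rightarrow> bool" where
  "subring R \<longleftrightarrow> (\<forall>k. of_int k \<in> R) \<and> (\<forall>x\<in>R. \<forall>y\<in>R. x + y \<in> R \<and> x * y \<in> R)"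

lemma subring_power: "subring R \<Longrightarrow> x \<in> R \<Longrightarrow> x ^ k \<in> R"
  by (induction k) (auto simp: subring_def dest: spec[of _ 1])

lemma subring_diff: "subring R \<Longrightarrow> x \<in> R \<Longrightarrow> y \<in> R \<Longrightarrow> x - y \<in> R"
  unfolding subring_def by (metis diff_conv_add_uminus mult_minus1 of_int_1 of_int_minus)

lemma poly_frac:
  assumes R: "subring R" and s: "s \<in> R" and t: "t \<in> R" and t0: "t \<noteq> 0"
  shows "intpoly q \<Longrightarrow> \<exists>w D. w \<in> R \<and> poly q (s / t) = w / t ^ D"
proof (induction q)
  case (pCons c q)
  have "intpoly q" using pCons.prems unfolding intpoly_def
    by (metis coeff_pCons_Suc)
  then obtain w D where w: "w \<in> R" "poly q (s/t) = w / t^D" using pCons.IH by blast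
  have "c \<in> \<int>" using pCons.prems unfolding intpoly_def by (metis coeff_pCons_0)
  then obtain k where k: "c = of_int k" by (auto elim: Ints_cases)
  have "poly (pCons c q) (s/t) = c + s / t * (w / t^D)" using w by simp
  also have "\<dots> = (of_int k * t^(Suc D) + s * w) / t^(Suc D)"
    using t0 k by (simp add: field_simps)
  finally have eq: "poly (pCons c q) (s/t) = (of_int k * t^(Suc D) + s * w) / t^(Suc D)" .
  have tD: "t^(Suc D) \<in> R" by (rule subring_power[OF R t])
  have RR: "\<And>x y. x \<in> R \<Longrightarrow> y \<in> R \<Longrightarrow> x + y \<in> R \<and> x * y \<in> R"
     and Rk: "\<And>k. of_int k \<in> R" using R unfolding subring_def by auto
  have "of_int k * t^(Suc D) \<in> R" using RR[OF Rk tD] by simp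
  moreover have "s * w \<in> R" using RR[OF s w(1)] by simp
  ultimately have "of_int k * t^(Suc D) + s * w \<in> R" using RR by simp
  then show ?case using eq by blast
next
  case 0
  have "of_int 0 \<in> R" using R unfolding subring_def by blast
  then show ?case by (intro exI[of _ 0] exI[of _ 0]) simp
qed



lemma Ints_floor_Re: "b \<in> \<int> \<Longrightarrow> of_int \<lfloor>Re b\<rfloor> = (b::complex)"
  by (metis Ints_cases Re_complex_of_real floor_of_int of_real_of_int_eq)

locale mpoly =
  fixes a :: complex and g :: "int poly" and n :: nat
  assumes a0: "a \<noteq> 0" and g0: "g \<noteq> 0" and gcont: "content g = 1"
    and groot: "(\<Sum>i\<le>n. of_int (coeff g i) * a ^ i) = 0"
    and ndeg: "n = degree g"
begin

definition c :: "nat \<Rightarrow> complex" where "c i = of_int (coeff g i)"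

lemma n_pos: "n \<ge> 1"
proof (rule ccontr)
  assume "\<not> n \<ge> 1"
  then have "n = 0" by simp
  then have "of_int (coeff g 0) = (0::complex)" using groot by simp
  then have "coeff g 0 = 0" by simp
  then have "g = 0" using \<open>n = 0\<close> ndeg by (metis leading_coeff_0_iff)
  then show False using g0 by simp
qed

definition M :: "complex set" where
  "M = {z. \<exists>p. intpoly p \<and> degree p < n \<and> z = poly p a}"

lemma M_add: "x \<in> M \<Longrightarrow> y \<in> M \<Longrightarrow> x + y \<in> M"
  unfolding M_def
proof clarify
  fix p q assume "intpoly p" "degree p < n" "intpoly q" "degree q < n"
  then show "\<exists>r. intpoly r \<and> degree r < n \<and> poly p a + poly q a = poly r a"
    by (intro exI[of _ "p + q"]) (auto intro: intpoly_add simp: degree_add_less)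
qed

lemma M_scal: "k \<in> \<int> \<Longrightarrow> x \<in> M \<Longrightarrow> k * x \<in> M"
  unfolding M_def
proof clarify
  fix p assume "k \<in> \<int>" "intpoly p" "degree p < n"
  then show "\<exists>r. intpoly r \<and> degree r < n \<and> k * poly p a = poly r a"
    by (intro exI[of _ "Polynomial.smult k p"]) (auto simp: intpoly_def Ints_mult le_less_trans[OF degree_smult_le])
qed

lemma M_zero: "0 \<in> M"
  unfolding M_def using n_pos by (intro CollectI exI[of _ 0]) (auto simp: intpoly_def)

lemma M_sum: "finite I \<Longrightarrow> (\<And>i. i \<in> I \<Longrightarrow> f i \<in> M) \<Longrightarrow> sum f I \<in> M"
  by (induction I rule: finite_induct) (auto intro: M_add M_zero)

lemma M_minus: "x \<in> M \<Longrightarrow> - x \<in> M"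
  using M_scal[of "-1" x] by simp

lemma M_monom: "k \<in> \<int> \<Longrightarrow> e < n \<Longrightarrow> k * a ^ e \<in> M"
  unfolding M_def
  by (intro CollectI exI[of _ "monom k e"])
     (auto simp: intpoly_def coeff_monom poly_monom le_less_trans[OF degree_monom_le])

lemma M_expand:
  assumes "z \<in> M"
  shows "\<exists>b. (\<forall>l. b l \<in> \<int>) \<and> z = (\<Sum>l<n. b l * a ^ l)"
proof -
  obtain p where p: "intpoly p" "degree p < n" "z = poly p a" using assms unfolding M_def by blast
  have "z = (\<Sum>l\<le>degree p. coeff p l * a ^ l)" using p(3) by (simp add: poly_altdef)
  also have "\<dots> = (\<Sum>l<n. coeff p l * a ^ l)"
  proof (rule sum.mono_neutral_left)
    show "\<forall>i\<in>{..<n} - {..degree p}. coeff p i * a ^ i = 0" by (auto simp: coeff_eq_0)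
  qed (use p(2) in auto)
  finally show ?thesis using p(1) unfolding intpoly_def by blast
qed

definition Rg :: "complex set" where
  "Rg = {z \<in> Zring a. \<forall>w\<in>M. z * w \<in> M}"

lemma Rg_intro:
  assumes "z \<in> Zring a" "\<And>l. l < n \<Longrightarrow> z * a ^ l \<in> M"
  shows "z \<in> Rg"
  unfolding Rg_def
proof (intro CollectI conjI ballI)
  fix w assume "w \<in> M"
  then obtain b where b: "\<forall>l. b l \<in> \<int>" "w = (\<Sum>l<n. b l * a ^ l)" using M_expand by blast
  have "z * w = (\<Sum>l<n. b l * (z * a ^ l))" unfolding b(2) sum_distrib_left
    by (simp add: algebra_simps)
  also have "\<dots> \<in> M"
  proof (rule M_sum)
    fix l assume "l \<in> {..<n}"
    then show "b l * (z * a ^ l) \<in> M" using M_scal[of "b l" "z * a ^ l"] b(1) assms(2) by blast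
  qed simp
  finally show "z * w \<in> M" .
qed (use assms in auto)

lemma Rg_subring: "subring Rg"
  unfolding subring_def
proof (intro conjI allI ballI)
  fix k :: int show "of_int k \<in> Rg"
    unfolding Rg_def by (auto intro: Zring_of_int M_scal)
next
  fix x y assume x: "x \<in> Rg" and y: "y \<in> Rg"
  show "x + y \<in> Rg" using x y unfolding Rg_def by (auto intro: Zring_add M_add simp: distrib_right)
  show "x * y \<in> Rg" using x y unfolding Rg_def by (auto intro: Zring_mult simp: mult.assoc)
qed

lemma Rg_alg_int:
  assumes z: "z \<in> Rg" shows "algebraic_int z"
proof -
  have "\<forall>i. \<exists>b. i < n \<longrightarrow> (\<forall>l. b l \<in> \<int>) \<and> z * a ^ i = (\<Sum>l<n. b l * a ^ l)"
  proof
    fix i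
    show "\<exists>b. i < n \<longrightarrow> (\<forall>l. b l \<in> \<int>) \<and> z * a ^ i = (\<Sum>l<n. b l * a ^ l)"
    proof (cases "i < n")
      case True
      then have "a ^ i \<in> M" using M_monom[of 1 i] by simp
      then have "z * a ^ i \<in> M" using z unfolding Rg_def by blast
      then show ?thesis using M_expand by blast
    qed simp
  qed
  then obtain B where B: "\<And>i. i < n \<Longrightarrow> (\<forall>l. B i l \<in> \<int>) \<and> z * a ^ i = (\<Sum>l<n. B i l * a ^ l)"
    by metis
  show ?thesis
  proof (rule eig_alg_int[of 0 n "\<lambda>l. a ^ l" z "\<lambda>i l. \<lfloor>Re (B i l)\<rfloor>"])
    show "0 < n" using n_pos by simp
    show "a ^ 0 \<noteq> 0" by simp
    fix i assume i: "i < n"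
    show "z * a ^ i = (\<Sum>l<n. of_int \<lfloor>Re (B i l)\<rfloor> * a ^ l)"
      using B[OF i] by (simp add: Ints_floor_Re)
  qed
qed

lemma Rg_OK: "z \<in> Rg \<Longrightarrow> z \<in> OK a"
  unfolding OK_def using Rg_alg_int Zring_Qfield Rg_def by blast

definition U :: "nat \<Rightarrow> complex" where
  "U j = (\<Sum>i=j..n. c i * a ^ (i - j))"

lemma U_Zring: "U j \<in> Zring a"
  unfolding U_def c_def
  by (intro Zring_sum Zring_mult Zring_of_int Zring_power Zring_var) auto

lemma U_mult_pow: "U j * a ^ j = (\<Sum>i=j..n. c i * a ^ i)"
  unfolding U_def sum_distrib_right
  by (intro sum.cong refl) (auto simp: mult.assoc power_add[symmetric])

lemma U_eq: assumes "j \<le> n" shows "U j * a ^ j = - (\<Sum>i<j. c i * a ^ i)"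
proof -
  have "(\<Sum>i\<le>n. c i * a ^ i) = (\<Sum>i<j. c i * a ^ i) + (\<Sum>i=j..n. c i * a ^ i)"
  proof -
    have "{..n} = {..<j} \<union> {j..n}" using assms by auto
    then show ?thesis by (simp add: sum.union_disjoint ivl_disj_int)
  qed
  then show ?thesis using groot unfolding c_def U_mult_pow[unfolded c_def]
    by (simp add: eq_neg_iff_add_eq_0 add.commute)
qed

lemma U_0: "U 0 = 0"
  using U_eq[of 0] by simp

lemma U_n: "U n = c n"
  unfolding U_def by simp

lemma U_rec: assumes "j < n" shows "a * U (Suc j) = U j - c j"
proof -
  have "U j = c j * a ^ 0 + (\<Sum>i=Suc j..n. c i * a ^ (i - j))"
    unfolding U_def using assms by (simp add: sum.atLeast_Suc_atMost)
  moreover have "(\<Sum>i=Suc j..n. c i * a ^ (i - j)) = a * U (Suc j)"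
    unfolding U_def sum_distrib_left
  proof (intro sum.cong refl)
    fix i assume "i \<in> {Suc j..n}"
    then have "i - j = Suc (i - Suc j)" by auto
    then show "c i * a ^ (i - j) = a * (c i * a ^ (i - Suc j))" by simp
  qed
  ultimately show ?thesis by simp
qed

lemma U_Rg: assumes "j \<le> n" shows "U j \<in> Rg"
proof (rule Rg_intro[OF U_Zring])
  fix l assume l: "l < n"
  show "U j * a ^ l \<in> M"
  proof (cases "l < j")
    case True
    have "U j * a ^ l = (\<Sum>i=j..n. c i * a ^ (i - j + l))"
      unfolding U_def sum_distrib_right
    proof (intro sum.cong refl)
      fix i assume "i \<in> {j..n}"
      then have "i - j + l = i + l - j" by auto
      then show "c i * a ^ (i - j) * a ^ l = c i * a ^ (i - j + l)"
        by (metis mult.assoc power_add)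
    qed
    also have "\<dots> \<in> M"
    proof (intro M_sum M_monom)
      fix i assume "i \<in> {j..n}"
      then show "i - j + l < n" using True by auto
    qed (auto simp: c_def)
    finally show ?thesis .
  next
    case False
    have "U j * a ^ l = (U j * a ^ j) * a ^ (l - j)"
      using False by (simp add: mult.assoc power_add[symmetric])
    also have "\<dots> = - (\<Sum>i<j. c i * a ^ (i + (l - j)))"
      using U_eq[OF assms] by (simp add: sum_distrib_right mult.assoc power_add)
    also have "\<dots> \<in> M"
    proof (intro M_minus M_sum M_monom)
      fix i assume "i \<in> {..<j}"
      then show "i + (l - j) < n" using False l by auto
    qed (auto simp: c_def)
    finally show ?thesis .
  qed
qed

lemma aU_Rg: assumes "j < n" shows "a * U (Suc j) \<in> Rg"
  unfolding U_rec[OF assms] c_def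
  using assms Rg_subring U_Rg subring_diff subring_def by auto

end



context mpoly begin

lemma prime_facts:
  assumes "prime_ideal_OK a P"
  shows "P \<subseteq> OK a" "0 \<in> P" "1 \<notin> P"
    "\<And>x y. x \<in> P \<Longrightarrow> y \<in> P \<Longrightarrow> x + y \<in> P"
    "\<And>x r. x \<in> P \<Longrightarrow> r \<in> OK a \<Longrightarrow> r * x \<in> P"
    "\<And>x y. x \<in> OK a \<Longrightarrow> y \<in> OK a \<Longrightarrow> x * y \<in> P \<Longrightarrow> x \<in> P \<or> y \<in> P"
proof -
  note P = assms[unfolded prime_ideal_OK_def]
  show "P \<subseteq> OK a" "0 \<in> P" using P by auto
  show "\<And>x y. x \<in> P \<Longrightarrow> y \<in> P \<Longrightarrow> x + y \<in> P" using P by auto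
  show "\<And>x r. x \<in> P \<Longrightarrow> r \<in> OK a \<Longrightarrow> r * x \<in> P" using P by auto
  show "\<And>x y. x \<in> OK a \<Longrightarrow> y \<in> OK a \<Longrightarrow> x * y \<in> P \<Longrightarrow> x \<in> P \<or> y \<in> P" using P by auto
  show "1 \<notin> P"
  proof
    assume "1 \<in> P"
    have m: "\<And>r. r \<in> OK a \<Longrightarrow> r * 1 \<in> P" using P \<open>1 \<in> P\<close> by blast
    have "OK a \<subseteq> P"
    proof
      fix r assume "r \<in> OK a" then show "r \<in> P" using m[of r] by simp
    qed
    then show False using P by blast
  qed
qed

lemma int_OK: "of_int k \<in> OK a"
  using Rg_OK Rg_subring subring_def by blast

lemma content_in_P:
  assumes P: "prime_ideal_OK a P"
  shows "(\<forall>i. of_int (coeff q i) \<in> P) \<Longrightarrow> of_int (content q) \<in> P"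
proof (induction q)
  case 0
  then show ?case using prime_facts[OF P] by simp
next
  case (pCons x q)
  have hq: "\<forall>i. of_int (coeff q i) \<in> P" using pCons.prems by (metis coeff_pCons_Suc)
  have hx: "of_int x \<in> P" using pCons.prems by (metis coeff_pCons_0)
  have hc: "of_int (content q) \<in> P" using pCons.IH[OF hq] .
  obtain u v where uv: "u * x + v * content q = gcd x (content q)" using bezout_int by blast
  have "(of_int (gcd x (content q)) :: complex) = of_int u * of_int x + of_int v * of_int (content q)"
    unfolding uv[symmetric] by simp
  also have "\<dots> \<in> P"
  proof -
    note pf = prime_facts[OF P]
    have "of_int u * of_int x \<in> P" by (rule pf(5)[OF hx int_OK])
    moreover have "of_int v * of_int (content q) \<in> P" by (rule pf(5)[OF hc int_OK])
    ultimately show ?thesis by (rule pf(4))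
  qed
  finally show ?case by (simp add: content_pCons_int)
qed

end

lemma pow_ideal:
  assumes "s \<in> P" "w \<in> OK a"
  shows "s ^ j * w \<in> ideal_pow a P j"
proof (induction j)
  case 0 then show ?case using assms by simp
next
  case (Suc j)
  have "s ^ Suc j * w = (\<Sum>i\<in>{0::nat}. (\<lambda>_. s ^ j * w) i * (\<lambda>_. s) i)" by simp
  then show ?case using Suc assms(1)
    by (simp only: ideal_pow.simps) (intro CollectI exI[of _ "{0::nat}"] exI[of _ "\<lambda>_. s ^ j * w"] exI[of _ "\<lambda>_. s"], auto)
qed




lemma exists_mpoly:
  assumes alg: "algebraic a" and a0: "a \<noteq> 0"
  shows "\<exists>g. mpoly a g (degree g)"
proof -
  obtain p where p: "\<And>i. coeff p i \<in> \<int>" "p \<noteq> 0" "poly p a = 0" using algebraicE[OF alg] by blast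
  define f where "f = map_poly (\<lambda>z. \<lfloor>Re z\<rfloor>) p"
  have pf: "map_poly of_int f = p"
  proof (rule poly_eqI)
    fix i show "coeff (map_poly of_int f) i = coeff p i"
      unfolding f_def by (simp add: coeff_map_poly Ints_floor_Re p(1))
  qed
  have f0: "f \<noteq> 0" using pf p(2) by auto
  define g where "g = primitive_part f"
  have g0: "g \<noteq> 0" using f0 g_def by simp
  have gc: "content g = 1" using f0 g_def by simp
  have fg: "f = Polynomial.smult (content f) g" unfolding g_def by simp
  have "p = Polynomial.smult (of_int (content f)) (map_poly of_int g)"
    unfolding pf[symmetric] by (subst fg) (rule of_int_hom.map_poly_hom_smult)
  then have "of_int (content f) * poly (map_poly of_int g) a = 0" using p(3) by simp
  moreover have "content f \<noteq> 0" using f0 by simp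
  ultimately have q0: "poly (map_poly of_int g) a = (0::complex)" by simp
  have dg: "degree (map_poly (of_int :: int \<Rightarrow> complex) g) = degree g"
    by (rule of_int_hom.degree_map_poly_hom)
  have "poly (map_poly of_int g) a = (\<Sum>i\<le>degree g. of_int (coeff g i) * a ^ i)"
    unfolding poly_altdef dg by (simp add: coeff_map_poly)
  then have "(\<Sum>i\<le>degree g. of_int (coeff g i) * a ^ i) = 0" using q0 by simp
  then have "mpoly a g (degree g)" by (rule mpoly.intro[OF a0 g0 gc _ refl])
  then show ?thesis by blast
qed

context mpoly begin

lemma key:
  assumes dd: "divides_denom a P"
  shows "\<exists>s t. s \<in> P \<and> t \<notin> P \<and> inverse a = s / t \<and> s \<in> Rg \<and> t \<in> Rg"
proof -
  have P: "prime_ideal_OK a P" and aloc: "a \<notin> localize a P (OK a)"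
    using dd unfolding divides_denom_def by auto
  note pf = prime_facts[OF P]
  have Pdiff: "x - y \<in> P" if "x \<in> P" "y \<in> P" for x y
  proof -
    have "of_int (-1) * y \<in> P" using pf(5) that int_OK by blast
    then have "- y \<in> P" by simp
    then have "x + - y \<in> P" by (rule pf(4)[OF that(1)])
    then show ?thesis by (metis diff_conv_add_uminus)
  qed
  have UP: "U (Suc j) \<in> P" if j: "j < n" for j
  proof (rule ccontr)
    assume nP: "U (Suc j) \<notin> P"
    have "U (Suc j) \<in> OK a" using U_Rg Rg_OK j by simp
    moreover have "a * U (Suc j) \<in> OK a" using aU_Rg Rg_OK j by simp
    moreover have "U (Suc j) \<noteq> 0" using nP pf(2) by auto
    ultimately have "a \<in> localize a P (OK a)" unfolding localize_def using nP
      by (intro CollectI exI[of _ "a * U (Suc j)"] exI[of _ "U (Suc j)"]) auto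
    then show False using aloc by simp
  qed
  have "\<exists>j. j < n \<and> a * U (Suc j) \<notin> P"
  proof (rule ccontr)
    assume "\<not> ?thesis"
    then have aUP: "\<And>j. j < n \<Longrightarrow> a * U (Suc j) \<in> P" by blast
    have "\<forall>i. of_int (coeff g i) \<in> P"
    proof
      fix i
      consider "i < n" | "i = n" | "i > n" by linarith
      then show "of_int (coeff g i) \<in> P"
      proof cases
        case 1
        have Ui: "U i \<in> P"
        proof (cases i)
          case 0 then show ?thesis using U_0 pf(2) by simp
        next
          case (Suc k) then show ?thesis using UP 1 by simp
        qed
        have "c i = U i - a * U (Suc i)" using U_rec[OF 1] by simp
        then show ?thesis using Pdiff[OF Ui aUP[OF 1]] c_def by simp
      next
        case 2
        have "U n \<in> P" using UP[of "n - 1"] n_pos by simp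
        then show ?thesis using U_n c_def 2 by simp
      next
        case 3
        then have "coeff g i = 0" using ndeg by (simp add: coeff_eq_0)
        then show ?thesis using pf(2) by simp
      qed
    qed
    then have "of_int (content g) \<in> P" using content_in_P[OF P] by blast
    then show False using gcont pf(3) by simp
  qed
  then obtain j where j: "j < n" "a * U (Suc j) \<notin> P" by blast
  have "U (Suc j) \<noteq> 0" using j pf(2) by auto
  then have e1: "inverse a = U (Suc j) / (a * U (Suc j))" using a0 by (simp add: field_simps)
  have e2: "U (Suc j) \<in> P" using UP[OF j(1)] .
  have e3: "U (Suc j) \<in> Rg" using U_Rg[of "Suc j"] j(1) by simp
  have e4: "a * U (Suc j) \<in> Rg" using aU_Rg[OF j(1)] .
  show ?thesis
    by (rule exI[of _ "U (Suc j)"], rule exI[of _ "a * U (Suc j)"], intro conjI e1 e2 e3 e4 j(2))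
qed

lemma tpow_notin:
  assumes P: "prime_ideal_OK a P" and t: "t \<in> Rg" "t \<notin> P"
  shows "t ^ k \<notin> P"
proof (induction k)
  case 0 then show ?case using prime_facts(3)[OF P] by simp
next
  case (Suc k)
  have t1: "t \<in> OK a" using t(1) by (rule Rg_OK)
  have t2: "t ^ k \<in> OK a" using subring_power[OF Rg_subring t(1)] by (rule Rg_OK)
  show ?case
  proof
    assume "t ^ Suc k \<in> P"
    then have "t * t ^ k \<in> P" by simp
    then have "t \<in> P \<or> t ^ k \<in> P" by (rule prime_facts(6)[OF P t1 t2])
    then show False using Suc.IH t(2) by blast
  qed
qed

end



lemma powi_step: "(a::complex) \<noteq> 0 \<Longrightarrow> a * a powi (m - 1) = a powi m"
  using power_int_add_1'[of a "m - 1"] by simp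

lemma powi_shift:
  assumes "(a::complex) \<noteq> 0" "int e = int n - m + 1"
  shows "a powi (m - 1) * y / a ^ n = inverse a ^ e * y"
proof -
  have "m - 1 = int n - int e" using assms(2) by simp
  then have "a powi (m - 1) = a powi (int n - int e)" by simp
  also have "\<dots> = a powi int n / a powi int e" by (rule power_int_diff) (use assms(1) in simp)
  also have "\<dots> = a ^ n / a ^ e" by simp
  finally have h: "a powi (m - 1) = a ^ n / a ^ e" .
  show ?thesis unfolding h using assms(1) by (simp add: power_inverse field_simps)
qed

lemma part1:
  assumes a0: "a \<noteq> 0" and DZ: "D \<subseteq> Zring a"
    and h4: "\<forall>y \<in> smult_set (a powi m) (Zring (inverse a)).
           \<exists>d \<in> D. y - d \<in> smult_set (a powi (m - 1)) (Zring (inverse a))"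
    and x: "x \<in> Lambda a m"
  shows "\<exists>d\<in>D. a * x + d \<in> Lambda a m"
proof -
  have xZ: "x \<in> Zring a" using x unfolding Lambda_def by simp
  obtain y where y: "y \<in> Zring (inverse a)" "x = a powi (m - 1) * y"
    using x unfolding Lambda_def smult_set_def by auto
  have "- (a * x) = a powi m * (- y)" using y(2) powi_step[OF a0, of m]
    by (simp add: mult.assoc[symmetric])
  then have "- (a * x) \<in> smult_set (a powi m) (Zring (inverse a))"
    unfolding smult_set_def using Zring_minus[OF y(1)] by blast
  then obtain d z where d: "d \<in> D" "z \<in> Zring (inverse a)" "- (a * x) - d = a powi (m - 1) * z"
    using h4 unfolding smult_set_def by blast
  have "a * x + d = - (- (a * x) - d)" by simp
  also have "\<dots> = - (a powi (m - 1) * z)" using d(3) by simp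
  also have "\<dots> = a powi (m - 1) * (- z)" by simp
  finally have "a * x + d = a powi (m - 1) * (- z)" .
  then have "a * x + d \<in> smult_set (a powi (m - 1)) (Zring (inverse a))"
    unfolding smult_set_def using Zring_minus[OF d(2)] by blast
  moreover have "a * x + d \<in> Zring a"
    using d(1) DZ xZ by (intro Zring_add Zring_mult Zring_var) auto
  ultimately show ?thesis using d(1) unfolding Lambda_def by blast
qed

theorem lemma6p10:
  fixes \<alpha> :: complex and D :: "complex set" and m :: int
  assumes "expanding \<alpha>"
    and "standard_digits \<alpha> D"
    and "D \<subseteq> smult_set (\<alpha> powi m) (Zring (inverse \<alpha>))"
    and "\<forall>y \<in> smult_set (\<alpha> powi m) (Zring (inverse \<alpha>)).
           \<exists>d \<in> D. y - d \<in> smult_set (\<alpha> powi (m - 1)) (Zring (inverse \<alpha>))"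
  shows "(\<forall>x \<in> Lambda \<alpha> m. \<exists>d \<in> D. \<alpha> * x + d \<in> Lambda \<alpha> m) \<and>
         (\<forall>x \<in> Lambda \<alpha> m. G_nonempty \<alpha> D x)"
proof -
  have alg: "algebraic \<alpha>" using assms(1) unfolding expanding_def by blast
  have "Defs.conjugate \<alpha> \<alpha>" unfolding Defs.conjugate_def by blast
  then have "1 < cmod \<alpha>" using assms(1) unfolding expanding_def by blast
  then have a0: "\<alpha> \<noteq> 0" by auto
  have DZ: "D \<subseteq> Zring \<alpha>" using assms(2) unfolding standard_digits_def by blast
  have P1: "\<forall>x \<in> Lambda \<alpha> m. \<exists>d \<in> D. \<alpha> * x + d \<in> Lambda \<alpha> m"
    using part1[OF a0 DZ assms(4)] by blast
  obtain g where mp: "mpoly \<alpha> g (degree g)" using exists_mpoly[OF alg a0] by blast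
  interpret mpoly \<alpha> g "degree g" by (rule mp)
  have P2: "G_nonempty \<alpha> D x" if x: "x \<in> Lambda \<alpha> m" for x
  proof -
    define st where "st y = (SOME d. d \<in> D \<and> \<alpha> * y + d \<in> Lambda \<alpha> m)" for y
    have st: "st y \<in> D \<and> \<alpha> * y + st y \<in> Lambda \<alpha> m" if "y \<in> Lambda \<alpha> m" for y
      unfolding st_def using P1 that by (metis (no_types, lifting) someI_ex)
    define xs where "xs = rec_nat x (\<lambda>k y. \<alpha> * y + st y)"
    have xs0: "xs 0 = x" and xsS: "\<And>k. xs (Suc k) = \<alpha> * xs k + st (xs k)"
      by (simp_all add: xs_def)
    have xsL: "xs k \<in> Lambda \<alpha> m" for k
      by (induction k) (use x st in \<open>simp_all add: xs0 xsS\<close>)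
    define d where "d k = st (xs (k - 1))" for k
    have dD: "d k \<in> D" if "k \<ge> 1" for k unfolding d_def using st xsL by blast
    have S: "x + (\<Sum>k=1..n. d k / \<alpha> ^ k) = xs n / \<alpha> ^ n" for n
    proof (induction n)
      case 0 then show ?case by (simp add: xs0)
    next
      case (Suc n)
      have "x + (\<Sum>k=1..Suc n. d k / \<alpha> ^ k) = xs n / \<alpha> ^ n + st (xs n) / \<alpha> ^ Suc n"
        using Suc by (simp add: d_def add.assoc[symmetric])
      also have "\<dots> = xs (Suc n) / \<alpha> ^ Suc n" using a0 by (simp add: xsS field_simps)
      finally show ?case .
    qed
    show ?thesis unfolding G_nonempty_def
    proof (rule exI[of _ d], rule conjI)
      show "\<forall>k\<ge>1. d k \<in> D" using dD by blast
    next
      show "\<forall>P. divides_denom \<alpha> P \<longrightarrow> padic_tendsto_zero \<alpha> P (\<lambda>n. x + (\<Sum>k=1..n. d k / \<alpha> ^ k))"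
      proof (intro allI impI)
      fix P assume dd: "divides_denom \<alpha> P"
      have P: "prime_ideal_OK \<alpha> P" using dd unfolding divides_denom_def by blast
      obtain s t where st': "s \<in> P" "t \<notin> P" "inverse \<alpha> = s / t" "s \<in> Rg" "t \<in> Rg"
        using key[OF dd] by blast
      have t0: "t \<noteq> 0" using st'(2) prime_facts(2)[OF P] by auto
      show "padic_tendsto_zero \<alpha> P (\<lambda>n. x + (\<Sum>k=1..n. d k / \<alpha> ^ k))"
        unfolding padic_tendsto_zero_def
      proof (rule allI)
        fix N
        show "\<exists>n0. \<forall>n\<ge>n0. x + (\<Sum>k=1..n. d k / \<alpha> ^ k) \<in> localize \<alpha> P (ideal_pow \<alpha> P N)"
        proof (intro exI[of _ "nat (int N + m)"] allI impI)
        fix n assume nN: "n \<ge> nat (int N + m)"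
        define e where "e = nat (int n - m + 1)"
        have eN: "e \<ge> N" and ee: "int e = int n - m + 1" using nN unfolding e_def by auto
        obtain y where y: "y \<in> Zring (inverse \<alpha>)" "xs n = \<alpha> powi (m - 1) * y"
          using xsL[of n] unfolding Lambda_def smult_set_def by auto
        obtain q where q: "intpoly q" "y = poly q (inverse \<alpha>)" using y(1) Zring_iff by blast
        obtain w D' where w: "w \<in> Rg" "poly q (s / t) = w / t ^ D'"
          using poly_frac[OF Rg_subring st'(4) st'(5) t0 q(1)] by blast
        have "x + (\<Sum>k=1..n. d k / \<alpha> ^ k) = inverse \<alpha> ^ e * y"
          unfolding S y(2) by (rule powi_shift[OF a0 ee])
        also have "\<dots> = (s / t) ^ e * (w / t ^ D')" using q(2) w(2) st'(3) by simp
        also have "\<dots> = (s ^ N * (s ^ (e - N) * w)) / t ^ (e + D')"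
          using eN by (simp add: power_divide power_add[symmetric] mult.assoc)
        finally have eq: "x + (\<Sum>k=1..n. d k / \<alpha> ^ k) = (s ^ N * (s ^ (e - N) * w)) / t ^ (e + D')" .
        have "s ^ (e - N) * w \<in> Rg"
          using Rg_subring st'(4) w(1) subring_power unfolding subring_def by blast
        then have num: "s ^ N * (s ^ (e - N) * w) \<in> ideal_pow \<alpha> P N"
          by (intro pow_ideal st'(1) Rg_OK)
        have den: "t ^ (e + D') \<in> OK \<alpha> - P"
          using tpow_notin[OF P st'(5) st'(2)] Rg_OK subring_power[OF Rg_subring st'(5)] by blast
        show "x + (\<Sum>k=1..n. d k / \<alpha> ^ k) \<in> localize \<alpha> P (ideal_pow \<alpha> P N)"
          unfolding localize_def eq using num den by blast
      qed
      qed
    qed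
    qed
  qed
  show ?thesis using P1 P2 by blast
qed


end
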